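(* Let $V\subset Z^n$ be finite, $G$ an Abelian group of order $|V|$, and $\phi:Z^n\to G$ a homomorphism whose restriction to $V$ is a bijection, and let $\mathcal{T}=\{V+l;\ l\in\ker\phi\}$ be the corresponding lattice tiling of $Z^n$. Then $\mathcal{T}$ is $p$-periodic, where $p=\mathrm{lcm}\{\mathrm{ord}(\phi(e_1)),\dots,\mathrm{ord}(\phi(e_n))\}$ and $\mathrm{ord}(g)$ is the order of $g$ in $G$.
   Context: $e_i$ is the $i$-th unit vector of $Z^n$. A set $\mathcal{S}\subset Z^n$ is $p$-periodic ($p>0$) if $s\in\mathcal{S}\iff s+pe_i\in\mathcal{S}$ for all $i=1,\dots,n$, and $p$ is the smallest positive number with this property. A tiling $\{V+l;\ l\in\mathcal{L}\}$ is $p$-periodic if $\mathcal{L}$ is $p$-periodic. *)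

theory Defs
  imports "HOL-Analysis.Analysis" "HOL-Algebra.Algebra"
begin

text \<open>Z^n is rendered as int^'n; the unit vector e_i is axis i 1, so p e_i = axis i p.\<close>

definition has_period :: "(int ^ 'n) set \<Rightarrow> nat \<Rightarrow> bool" where
  "has_period S p \<longleftrightarrow> (\<forall>s i. s \<in> S \<longleftrightarrow> s + axis i (int p) \<in> S)"

definition p_periodic :: "(int ^ 'n) set \<Rightarrow> nat \<Rightarrow> bool" where
  "p_periodic S p \<longleftrightarrow> p > 0 \<and> has_period S p \<and> (\<forall>q. q > 0 \<and> has_period S q \<longrightarrow> p \<le> q)"

definition tiling_p_periodic :: "(int ^ 'n) set \<Rightarrow> (int ^ 'n) set \<Rightarrow> nat \<Rightarrow> bool" where
  "tiling_p_periodic V L p \<longleftrightarrow> p_periodic L p"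

end

theory Submission
  imports Defs
begin

theorem corollary1:
  fixes V :: "(int ^ 'n) set" and G :: "('g, 'b) monoid_scheme" and \<phi> :: "int ^ 'n \<Rightarrow> 'g"
  assumes "finite V"
    and "comm_group G"
    and "order G = card V"
    and "\<forall>x. \<phi> x \<in> carrier G"
    and "\<forall>x y. \<phi> (x + y) = \<phi> x \<otimes>\<^bsub>G\<^esub> \<phi> y"
    and "bij_betw \<phi> V (carrier G)"
  shows "tiling_p_periodic V {l. \<phi> l = \<one>\<^bsub>G\<^esub>}
           (Lcm ((\<lambda>i. group.ord G (\<phi> (axis i 1))) ` UNIV))"
proof -
  interpret group G using assms(2) comm_group.axioms(2) by blast
  have cin: "\<And>x. \<phi> x \<in> carrier G" using assms(4) by blast
  have hom: "\<And>x y. \<phi> (x + y) = \<phi> x \<otimes>\<^bsub>G\<^esub> \<phi> y" using assms(5) by blast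
  have fin: "finite (carrier G)" using assms(1,6) bij_betw_finite by blast
  have z: "\<phi> 0 = \<one>\<^bsub>G\<^esub>"
  proof -
    have "\<phi> 0 \<otimes>\<^bsub>G\<^esub> \<phi> 0 = \<phi> 0 \<otimes>\<^bsub>G\<^esub> \<one>\<^bsub>G\<^esub>" using hom[of 0 0] cin by simp
    thus ?thesis using cin by (metis l_cancel one_closed)
  qed
  have pw: "\<phi> (axis i (int k)) = \<phi> (axis i 1) [^]\<^bsub>G\<^esub> k" for i k
  proof (induction k)
    case 0 then show ?case using z by (simp add: axis_def zero_vec_def)
  next
    case (Suc k)
    have "axis i (int (Suc k)) = axis i (int k) + axis i 1"
      by (simp add: axis_def vec_eq_iff)
    then show ?case using Suc hom cin by (simp add: nat_pow_Suc)
  qed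
  let ?L = "{l. \<phi> l = \<one>\<^bsub>G\<^esub>}"
  have hp: "has_period ?L p \<longleftrightarrow> (\<forall>i. group.ord G (\<phi> (axis i 1)) dvd p)" for p
  proof
    assume h: "has_period ?L p"
    show "\<forall>i. group.ord G (\<phi> (axis i 1)) dvd p"
    proof
      fix i
      have "0 \<in> ?L" using z by simp
      hence "0 + axis i (int p) \<in> ?L" using h unfolding has_period_def by blast
      thus "group.ord G (\<phi> (axis i 1)) dvd p" using pw pow_eq_id cin by simp
    qed
  next
    assume h: "\<forall>i. group.ord G (\<phi> (axis i 1)) dvd p"
    show "has_period ?L p" unfolding has_period_def
    proof (intro allI)
      fix s i
      have "\<phi> (axis i (int p)) = \<one>\<^bsub>G\<^esub>" using h pw pow_eq_id cin by simp
      then have "\<phi> (s + axis i (int p)) = \<phi> s" using hom cin by simp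
      thus "(s \<in> ?L) = (s + axis i (int p) \<in> ?L)" by simp
    qed
  qed
  let ?A = "(\<lambda>i. group.ord G (\<phi> (axis i 1))) ` (UNIV :: 'n set)"
  have pos: "Lcm ?A > 0"
  proof -
    have "0 \<notin> ?A" using ord_ge_1[OF fin] cin by (metis (no_types, lifting) imageE not_one_le_zero)
    thus ?thesis using Lcm_0_iff[of ?A] by (metis finite finite_imageI gr0I)
  qed
  have "has_period ?L (Lcm ?A)" using hp by (simp add: dvd_Lcm)
  moreover have "Lcm ?A \<le> q" if "q > 0" "has_period ?L q" for q
  proof -
    have "Lcm ?A dvd q" using hp that(2) by (auto intro: Lcm_least)
    thus ?thesis using that(1) by (simp add: dvd_imp_le)
  qed
  ultimately show ?thesis unfolding tiling_p_periodic_def p_periodic_def using pos by blast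
qed

end
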